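(* Let $\psi\in\mathcal H$ be a normalized eigenvector of $U_\Bbbk$, $U_\Bbbk\psi=e^{i\theta}\psi$, let $\Psi_\Bbbk=(\psi,\bar UP_{[\![1]\!]}\psi)/\Gamma^{1/2}$ with $\Gamma=1+\langle\psi,P_{[\![1]\!]}\psi\rangle$, and let $\bar\mu_\Bbbk([\![\mathrm y]\!])=\langle\Psi_\Bbbk,\widetilde P_{[\![\mathrm y]\!]}\Psi_\Bbbk\rangle$. Then for every integer $1\leq n<\Bbbk-1$, $$\frac1n h_n(\bar\mu_\Bbbk)\geq\frac1{\Bbbk-1}h_{\Bbbk-1}(\bar\mu_\Bbbk)-\frac{n\log2}{\Bbbk-1}.$$
   Context: Let $\Bbbk\geq3$ and $\mathcal H=(\mathbb C^2)^{\otimes\Bbbk}$ with orthonormal basis $|\mathrm x\rangle=|\mathrm x_1\rangle\otimes\cdots\otimes|\mathrm x_\Bbbk\rangle$, $\mathrm x_i\in\{0,1\}$. For a binary word $\mathrm w$ of length $m\leq\Bbbk$, $P_{[\![\mathrm w]\!]}$ is the orthogonal projection onto the span of the $|\mathrm x\rangle$ whose first $m$ digits equal $\mathrm w$. Let $\mathbf U$ be a $2\times2$ unitary with all entries of modulus $2^{-1/2}$, $\bar U|\mathrm x\rangle=|\mathrm x_2\rangle\otimes\cdots\otimes|\mathrm x_\Bbbk\rangle\otimes\mathbf U|\mathrm x_1\rangle$, $\sigma$ the unitary exchanging the last two tensor factors, and $P'_{[\![j]\!]}=\bar UP_{[\![j]\!]}\bar U^*$. Let $U_\Bbbk=\bar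 UP_{[\![0]\!]}+\sigma\bar U^2P_{[\![1]\!]}$, i.e. $U_\Bbbk|\mathrm x\rangle=|\mathrm x_2\rangle\otimes\cdots\otimes|\mathrm x_\Bbbk\rangle\otimes\mathbf U|\mathrm x_1\rangle$ if $\mathrm x_1=0$ and $U_\Bbbk|\mathrm x\rangle=|\mathrm x_3\rangle\otimes\cdots\otimes|\mathrm x_\Bbbk\rangle\otimes\mathbf U|\mathrm x_2\rangle\otimes\mathbf U|\mathrm x_1\rangle$ if $\mathrm x_1=1$. Tower space $\widetilde{\mathcal H}=\mathcal H\oplus P'_{[\![1]\!]}\mathcal H$ with direct-sum scalar product. For a binary word $\mathrm y$ of length $n\leq\Bbbk-1$, $\widetilde P_{[\![\mathrm y]\!]}=P_{[\![\mathrm y]\!]}\oplus P'_{[\![1]\!]}P_{[\![\mathrm y]\!]}$, and $h_n(\bar\mu_\Bbbk)=-\sum_{|\mathrm y|=n}\bar\mu_\Bbbk([\![\mathrm y]\!])\log\bar\mu_\Bbbk([\![\mathrm y]\!])$ (with $0\log0=0$). *)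

theory Defs
  imports Complex_Main
begin

text \<open>Basis vectors |x> of (C^2)^{\<otimes>k} are indexed by binary words x (bool lists,
  True = 1, False = 0) of length k.  Vectors are functions from words to complex numbers,
  operators are given by their matrix kernels K y x = <y|K|x>.\<close>

definition words :: "nat \<Rightarrow> bool list set" where
  "words k = {xs. length xs = k}"

type_synonym vec = "bool list \<Rightarrow> complex"
type_synonym ker = "bool list \<Rightarrow> bool list \<Rightarrow> complex"

definition inner_k :: "nat \<Rightarrow> vec \<Rightarrow> vec \<Rightarrow> complex" where
  "inner_k k \<phi> \<psi> = (\<Sum>x\<in>words k. cnj (\<phi> x) * \<psi> x)"

definition app :: "nat \<Rightarrow> ker \<Rightarrow> vec \<Rightarrow> vec" where
  "app k A \<psi> = (\<lambda>y. \<Sum>x\<in>words k. A y x * \<psi> x)"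

definition kmul :: "nat \<Rightarrow> ker \<Rightarrow> ker \<Rightarrow> ker" where
  "kmul k A B = (\<lambda>y x. \<Sum>z\<in>words k. A y z * B z x)"

definition kadj :: "ker \<Rightarrow> ker" where
  "kadj A = (\<lambda>y x. cnj (A x y))"

definition kadd :: "ker \<Rightarrow> ker \<Rightarrow> ker" where
  "kadd A B = (\<lambda>y x. A y x + B y x)"

definition proj :: "bool list \<Rightarrow> ker" where
  "proj w = (\<lambda>y x. if y = x \<and> take (length w) x = w then 1 else 0)"

text \<open>A 2x2 matrix u, with u i j = <i|u|j>.\<close>
definition unitary2 :: "(bool \<Rightarrow> bool \<Rightarrow> complex) \<Rightarrow> bool" where
  "unitary2 u \<longleftrightarrow> (\<forall>i j. (\<Sum>l\<in>UNIV. cnj (u l i) * u l j) = (if i = j then 1 else 0))"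

text \<open>Ubar |x> = |x_2 ... x_k> \<otimes> U|x_1>.\<close>
definition Ubar :: "(bool \<Rightarrow> bool \<Rightarrow> complex) \<Rightarrow> ker" where
  "Ubar u = (\<lambda>y x. if butlast y = tl x then u (last y) (hd x) else 0)"

definition swap_last2 :: "bool list \<Rightarrow> bool list" where
  "swap_last2 x = take (length x - 2) x @ [x ! (length x - 1), x ! (length x - 2)]"

definition sigma :: ker where
  "sigma = (\<lambda>y x. if y = swap_last2 x then 1 else 0)"

definition Uk :: "nat \<Rightarrow> (bool \<Rightarrow> bool \<Rightarrow> complex) \<Rightarrow> ker" where
  "Uk k u = kadd (kmul k (Ubar u) (proj [False]))
                 (kmul k sigma (kmul k (Ubar u) (kmul k (Ubar u) (proj [True]))))"

definition Pprime1 :: "nat \<Rightarrow> (bool \<Rightarrow> bool \<Rightarrow> complex) \<Rightarrow> ker" where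
  "Pprime1 k u = kmul k (Ubar u) (kmul k (proj [True]) (kadj (Ubar u)))"

definition Gamma :: "nat \<Rightarrow> vec \<Rightarrow> complex" where
  "Gamma k \<psi> = 1 + inner_k k \<psi> (app k (proj [True]) \<psi>)"

text \<open>Tower vector Psi = (psi, Ubar P_[1] psi) / Gamma^{1/2}; mu([y]) = <Psi, Ptilde_[y] Psi>
  with Ptilde_[y] = P_[y] \<oplus> P'_[1] P_[y] and the direct-sum scalar product.\<close>
definition Psi1 :: "nat \<Rightarrow> vec \<Rightarrow> vec" where
  "Psi1 k \<psi> = (\<lambda>x. \<psi> x / csqrt (Gamma k \<psi>))"

definition Psi2 :: "nat \<Rightarrow> (bool \<Rightarrow> bool \<Rightarrow> complex) \<Rightarrow> vec \<Rightarrow> vec" where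
  "Psi2 k u \<psi> = (\<lambda>x. app k (kmul k (Ubar u) (proj [True])) \<psi> x / csqrt (Gamma k \<psi>))"

definition mu_bar :: "nat \<Rightarrow> (bool \<Rightarrow> bool \<Rightarrow> complex) \<Rightarrow> vec \<Rightarrow> bool list \<Rightarrow> real" where
  "mu_bar k u \<psi> y = Re (inner_k k (Psi1 k \<psi>) (app k (proj y) (Psi1 k \<psi>))
      + inner_k k (Psi2 k u \<psi>) (app k (kmul k (Pprime1 k u) (proj y)) (Psi2 k u \<psi>)))"

definition entr :: "(bool list \<Rightarrow> real) \<Rightarrow> nat \<Rightarrow> real" where
  "entr m n = - (\<Sum>y\<in>words n. if m y = 0 then 0 else m y * ln (m y))"

end

theory Submission
  imports Defs
begin


lemma finite_words[simp]: "finite (words n)"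
proof -
  have "words n = {xs. set xs \<subseteq> UNIV \<and> length xs = n}" by (auto simp: words_def)
  thus ?thesis using finite_lists_length_eq[of "UNIV::bool set" n] by simp
qed

lemma sum_bool: "(\<Sum>b\<in>(UNIV::bool set). f b) = f False + f True"
  by (simp add: UNIV_bool)

lemma words_Suc: "words (Suc n) = Cons False ` words n \<union> Cons True ` words n"
  unfolding words_def
  apply (auto simp: image_iff)
  by (metis (full_types) length_Suc_conv)

lemma sum_words_Suc:
  "(\<Sum>x\<in>words (Suc n). f x) = (\<Sum>z\<in>words n. f (False # z)) + (\<Sum>z\<in>words n. f (True # z))"
  unfolding words_Suc
  by (subst sum.union_disjoint) (auto simp: sum.reindex)

lemma words_0: "words 0 = {[]}" by (auto simp: words_def)

lemma sum_words_app:
  "(\<Sum>x\<in>words (a + b). f x) = (\<Sum>x\<in>words a. \<Sum>y\<in>words b. f (x @ y))"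
proof (induction a arbitrary: f)
  case 0 thus ?case by (simp add: words_0)
next
  case (Suc a)
  show ?case using Suc[of "\<lambda>x. f (False # x)"] Suc[of "\<lambda>x. f (True # x)"]
    by (simp add: sum_words_Suc)
qed

lemma sum_words_1: "(\<Sum>y\<in>words (Suc 0). f y) = f [False] + f [True]"
  using sum_words_Suc[where n=0 and f=f] by (simp add: words_0)

lemma sum_words_snoc:
  "(\<Sum>x\<in>words (Suc n). f x) = (\<Sum>z\<in>words n. f (z @ [False]) + f (z @ [True]))"
  using sum_words_app[where a=n and b=1 and f=f] by (simp add: sum_words_1)

lemma sum_words_2: "(\<Sum>y\<in>words 2. f y) = f [False,False] + f [False,True] + f [True,False] + f [True,True]"
  using sum_words_Suc[where n=1 and f=f] by (simp add: sum_words_1 numeral_2_eq_2 add.assoc)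



definition g :: "real \<Rightarrow> real" where "g p = (if p = 0 then 0 else p * ln p)"

lemma entr_g: "entr m n = - (\<Sum>y\<in>words n. g (m y))"
  unfolding entr_def g_def by simp

lemma sum_prod: "finite A \<Longrightarrow> finite B \<Longrightarrow> sum h (A \<times> B) = (\<Sum>x\<in>A. \<Sum>y\<in>B. h (x, y))"
  by (simp add: sum.cartesian_product)

lemma gibbs:
  assumes "finite S" "\<And>i. i \<in> S \<Longrightarrow> p i \<ge> 0" "\<And>i. i \<in> S \<Longrightarrow> q i \<ge> 0"
    "\<And>i. i \<in> S \<Longrightarrow> p i > 0 \<Longrightarrow> q i > 0" "sum p S = 1" "sum q S \<le> 1"
  shows "(\<Sum>i\<in>S. if p i = 0 then 0 else p i * ln (q i)) \<le> (\<Sum>i\<in>S. g (p i))"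
proof -
  have t: "(if p i = 0 then 0 else p i * ln (q i)) - g (p i) \<le> q i - p i" if i: "i \<in> S" for i
  proof (cases "p i = 0")
    case True thus ?thesis using assms(3)[OF i] by (simp add: g_def)
  next
    case False
    hence pp: "p i > 0" using assms(2)[OF i] by simp
    hence qp: "q i > 0" using assms(4)[OF i] by simp
    have "ln (q i / p i) \<le> q i / p i - 1" using ln_le_minus_one pp qp by simp
    hence "p i * ln (q i / p i) \<le> p i * (q i / p i - 1)" using pp by (simp add: mult_left_mono)
    moreover have "p i * (q i / p i - 1) = q i - p i" using pp by (simp add: field_simps)
    moreover have "ln (q i / p i) = ln (q i) - ln (p i)" using pp qp by (simp add: ln_div)
    ultimately show ?thesis using False by (simp add: g_def algebra_simps)
  qed
  have "(\<Sum>i\<in>S. (if p i = 0 then 0 else p i * ln (q i)) - g (p i)) \<le> (\<Sum>i\<in>S. q i - p i)"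
    using t by (rule sum_mono)
  also have "\<dots> \<le> 0" using assms(5,6) by (simp add: sum_subtractf)
  finally show ?thesis by (simp add: sum_subtractf)
qed

lemma abstract_ineq:
  fixes mu :: "bool list \<Rightarrow> real" and K n :: nat
  assumes nonneg: "\<And>w. length w \<le> K \<Longrightarrow> mu w \<ge> 0"
    and mu0: "mu [] = 1"
    and C: "\<And>w. length w < K \<Longrightarrow> mu w = mu (w @ [False]) + mu (w @ [True])"
    and S: "\<And>w. length w < K \<Longrightarrow> mu w = mu (False # w) + mu (True # w)"
    and n1: "1 \<le> n" and nK: "n < K"
  shows "entr mu n / real n \<ge> entr mu K / real K - real n * ln 2 / real K"
proof -
  have M1: "(\<Sum>y\<in>words b. mu (x @ y)) = mu x" if "length x + b \<le> K" for x b
    using that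
  proof (induction b)
    case 0 thus ?case by (simp add: words_0)
  next
    case (Suc b)
    have "(\<Sum>y\<in>words (Suc b). mu (x @ y)) = (\<Sum>z\<in>words b. mu (x @ z @ [False]) + mu (x @ z @ [True]))"
      by (simp add: sum_words_snoc)
    also have "\<dots> = (\<Sum>z\<in>words b. mu (x @ z))"
    proof (rule sum.cong[OF refl])
      fix z assume "z \<in> words b"
      thus "mu (x @ z @ [False]) + mu (x @ z @ [True]) = mu (x @ z)"
        using C[of "x @ z"] Suc.prems by (simp add: words_def)
    qed
    finally show ?case using Suc by simp
  qed
  have M2: "(\<Sum>x\<in>words a. mu (x @ y)) = mu y" if "a + length y \<le> K" for y a
    using that
  proof (induction a)
    case 0 thus ?case by (simp add: words_0)
  next
    case (Suc a)
    have "(\<Sum>x\<in>words (Suc a). mu (x @ y)) = (\<Sum>z\<in>words a. mu (False # z @ y) + mu (True # z @ y))"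
      by (simp add: sum_words_Suc sum.distrib)
    also have "\<dots> = (\<Sum>z\<in>words a. mu (z @ y))"
    proof (rule sum.cong[OF refl])
      fix z assume "z \<in> words a"
      thus "mu (False # z @ y) + mu (True # z @ y) = mu (z @ y)"
        using S[of "z @ y"] Suc.prems by (simp add: words_def)
    qed
    finally show ?case using Suc by simp
  qed
  have tot: "(\<Sum>w\<in>words m. mu w) = 1" if "m \<le> K" for m
    using M2[of m "[]"] that mu0 by simp
  have nn: "mu w \<ge> 0" if "w \<in> words m" "m \<le> K" for w m
    using nonneg that by (auto simp: words_def)
  have le1: "mu w \<le> 1" if "w \<in> words m" "m \<le> K" for w m
  proof -
    have "mu w \<le> (\<Sum>w\<in>words m. mu w)"
      by (rule member_le_sum) (use that nn in auto)
    thus ?thesis using tot that by simp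
  qed
  have Hnn: "entr mu m \<ge> 0" if "m \<le> K" for m
  proof -
    have "g (mu w) \<le> 0" if "w \<in> words m" for w
    proof -
      have "0 \<le> mu w" "mu w \<le> 1" using nn le1 that \<open>m \<le> K\<close> by auto
      thus ?thesis unfolding g_def
        by (auto intro!: mult_nonneg_nonpos)
    qed
    hence "(\<Sum>y\<in>words m. g (mu y)) \<le> 0" by (simp add: sum_nonpos)
    thus ?thesis by (simp add: entr_g)
  qed
  have H0: "entr mu 0 = 0" by (simp add: entr_g words_0 mu0 g_def)
  have Hsub: "entr mu (a + b) \<le> entr mu a + entr mu b" if ab: "a + b \<le> K" for a b
  proof -
    define P where "P = (\<lambda>(x, y). mu (x @ y))"
    define Q where "Q = (\<lambda>(x::bool list, y::bool list). mu x * mu y)"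
    let ?S = "words a \<times> words b"
    have zx: "mu (x @ y) = 0" if "x \<in> words a" "y \<in> words b" "mu x = 0" for x y
    proof -
      have "(\<Sum>y\<in>words b. mu (x @ y)) = 0" using M1[of x b] that ab by (simp add: words_def)
      hence "\<forall>y\<in>words b. mu (x @ y) = 0"
        by (subst (asm) sum_nonneg_eq_0_iff) (use nonneg that ab finite_words[unfolded words_def] in \<open>auto simp: words_def\<close>)
      thus ?thesis using that by auto
    qed
    have zy: "mu (x @ y) = 0" if "x \<in> words a" "y \<in> words b" "mu y = 0" for x y
    proof -
      have "(\<Sum>x\<in>words a. mu (x @ y)) = 0" using M2[of a y] that ab by (simp add: words_def)
      hence "\<forall>x\<in>words a. mu (x @ y) = 0"
        by (subst (asm) sum_nonneg_eq_0_iff) (use nonneg that ab finite_words[unfolded words_def] in \<open>auto simp: words_def\<close>)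
      thus ?thesis using that by auto
    qed
    have nnxy: "mu (x @ y) \<ge> 0" if "x \<in> words a" "y \<in> words b" for x y
      using nonneg that ab by (auto simp: words_def)
    have nnx: "mu x \<ge> 0" if "x \<in> words a" for x using nonneg that ab by (auto simp: words_def)
    have nny: "mu y \<ge> 0" if "y \<in> words b" for y using nonneg that ab by (auto simp: words_def)
    have sumP: "sum P ?S = 1"
    proof -
      have "sum P ?S = (\<Sum>x\<in>words a. \<Sum>y\<in>words b. mu (x @ y))"
        unfolding P_def sum.cartesian_product[symmetric] by simp
      also have "\<dots> = (\<Sum>x\<in>words a. mu x)"
        by (rule sum.cong[OF refl], rule M1) (use ab in \<open>simp add: words_def\<close>)
      also have "\<dots> = 1" using tot[of a] ab by simp
      finally show ?thesis .
    qed
    have sumQ: "sum Q ?S = 1"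
    proof -
      have "sum Q ?S = (\<Sum>x\<in>words a. \<Sum>y\<in>words b. mu x * mu y)"
        unfolding Q_def sum.cartesian_product[symmetric] by simp
      also have "\<dots> = (\<Sum>x\<in>words a. mu x) * (\<Sum>y\<in>words b. mu y)"
        by (simp add: sum_product)
      also have "\<dots> = 1" using tot[of a] tot[of b] ab by simp
      finally show ?thesis .
    qed
    have G: "(\<Sum>i\<in>?S. if P i = 0 then 0 else P i * ln (Q i)) \<le> (\<Sum>i\<in>?S. g (P i))"
    proof (rule gibbs)
      fix i assume "i \<in> ?S" thus "P i \<ge> 0" by (auto simp: P_def nnxy)
    next
      fix i assume "i \<in> ?S" thus "Q i \<ge> 0" by (auto simp: Q_def nnx nny)
    next
      fix i assume i: "i \<in> ?S" "P i > 0"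
      then obtain x y where xy: "i = (x, y)" "x \<in> words a" "y \<in> words b" by auto
      have "mu x \<noteq> 0" "mu y \<noteq> 0" using zx zy xy i by (auto simp: P_def)
      thus "Q i > 0" using xy nnx nny by (simp add: Q_def less_le)
    qed (use sumP sumQ in auto)
    have L: "(\<Sum>i\<in>?S. if P i = 0 then 0 else P i * ln (Q i))
        = (\<Sum>x\<in>words a. g (mu x)) + (\<Sum>y\<in>words b. g (mu y))"
    proof -
      have "(\<Sum>i\<in>?S. if P i = 0 then 0 else P i * ln (Q i))
          = (\<Sum>x\<in>words a. \<Sum>y\<in>words b. (if mu x = 0 then 0 else mu (x @ y) * ln (mu x))
               + (if mu y = 0 then 0 else mu (x @ y) * ln (mu y)))"
        unfolding sum_prod[OF finite_words finite_words]
      proof (intro sum.cong refl)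
        fix x y assume xy: "x \<in> words a" "y \<in> words b"
        show "(if P (x, y) = 0 then 0 else P (x, y) * ln (Q (x, y))) =
          (if mu x = 0 then 0 else mu (x @ y) * ln (mu x)) + (if mu y = 0 then 0 else mu (x @ y) * ln (mu y))"
        proof (cases "mu (x @ y) = 0")
          case True thus ?thesis by (simp add: P_def)
        next
          case False
          hence "mu x \<noteq> 0" "mu y \<noteq> 0" using zx zy xy by auto
          hence "mu x > 0" "mu y > 0" using nnx nny xy by (auto simp: less_le)
          thus ?thesis using False by (simp add: P_def Q_def ln_mult distrib_left)
        qed
      qed
      also have "\<dots> = (\<Sum>x\<in>words a. g (mu x)) + (\<Sum>x\<in>words a. \<Sum>y\<in>words b. (if mu y = 0 then 0 else mu (x @ y) * ln (mu y)))"
      proof -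
        have "(\<Sum>y\<in>words b. (if mu x = 0 then 0 else mu (x @ y) * ln (mu x))) = g (mu x)"
          if "x \<in> words a" for x
          using M1[of x b] that ab by (auto simp: g_def words_def sum_distrib_right[symmetric])
        thus ?thesis by (simp add: sum.distrib)
      qed
      also have "(\<Sum>x\<in>words a. \<Sum>y\<in>words b. (if mu y = 0 then 0 else mu (x @ y) * ln (mu y)))
           = (\<Sum>y\<in>words b. g (mu y))"
      proof -
        have "(\<Sum>x\<in>words a. (if mu y = 0 then 0 else mu (x @ y) * ln (mu y))) = g (mu y)"
          if "y \<in> words b" for y
          using M2[of a y] that ab by (auto simp: g_def words_def sum_distrib_right[symmetric])
        thus ?thesis by (subst sum.swap) simp
      qed
      finally show ?thesis .
    qed
    have R: "(\<Sum>i\<in>?S. g (P i)) = (\<Sum>w\<in>words (a + b). g (mu w))"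
      unfolding sum_words_app sum_prod[OF finite_words finite_words] P_def by simp
    show ?thesis using G L R by (simp add: entr_g)
  qed
  have H1: "entr mu 1 \<le> ln 2"
  proof -
    have "(\<Sum>i\<in>words 1. if mu i = 0 then 0 else mu i * ln (1/2)) \<le> (\<Sum>i\<in>words 1. g (mu i))"
    proof (rule gibbs)
      have "card (words 1) = 2" unfolding words_def using card_lists_length_eq[of "UNIV::bool set" 1]
        by simp
      thus "(\<Sum>i\<in>words 1. 1/2::real) \<le> 1" by simp
    qed (use nn tot nK n1 in auto)
    moreover have "(\<Sum>i\<in>words 1. if mu i = 0 then 0 else mu i * ln (1/2)) = - ln 2"
    proof -
      have "(\<Sum>i\<in>words 1. if mu i = 0 then 0 else mu i * ln (1/2)) = (\<Sum>i\<in>words 1. mu i * ln (1/2))"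
        by (rule sum.cong) auto
      also have "\<dots> = - ln 2" using tot[of 1] nK n1
        by (simp add: sum_distrib_right[symmetric] ln_div sum_negf)
      finally show ?thesis .
    qed
    ultimately show ?thesis by (simp add: entr_g)
  qed
  have Hm: "entr mu m \<le> real m * ln 2" if "m \<le> K" for m
    using that
  proof (induction m)
    case 0 thus ?case by (simp add: H0)
  next
    case (Suc m)
    have "entr mu (Suc m) \<le> entr mu 1 + entr mu m" using Hsub[of 1 m] Suc.prems by simp
    thus ?case using Suc H1 by (simp add: algebra_simps)
  qed
  have Hq: "entr mu (j * n + r) \<le> real j * entr mu n + entr mu r" if "j * n + r \<le> K" for j r
    using that
  proof (induction j)
    case 0 thus ?case by simp
  next
    case (Suc j)
    have "entr mu (n + (j * n + r)) \<le> entr mu n + entr mu (j * n + r)"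
      using Hsub[of n "j * n + r"] Suc.prems by (simp add: add.assoc)
    thus ?case using Suc by (simp add: algebra_simps)
  qed
  define j where "j = K div n"
  define r where "r = K mod n"
  have Kjr: "K = j * n + r" by (simp add: j_def r_def)
  have rn: "r < n" using n1 by (simp add: r_def)
  have hK: "entr mu K \<le> real j * entr mu n + real r * ln 2"
    using Hq[of j r] Hm[of r] Kjr by simp
  have hn: "entr mu n \<ge> 0" using Hnn nK by simp
  have Kpos: "real K > 0" using nK by simp
  have jn: "real j * real n \<le> real K" using Kjr by (simp flip: of_nat_mult)
  have "real j * entr mu n / real K \<le> entr mu n / real n"
  proof -
    have "real j * entr mu n * real n \<le> entr mu n * real K"
      using mult_left_mono[OF jn hn] by (simp add: algebra_simps)
    thus ?thesis using Kpos n1 by (simp add: field_simps)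
  qed
  moreover have "real r * ln 2 \<le> real n * ln 2" using rn by simp
  hence "real r * ln 2 / real K \<le> real n * ln 2 / real K" using Kpos by (simp add: divide_right_mono)
  moreover have "entr mu K / real K \<le> real j * entr mu n / real K + real r * ln 2 / real K"
    using hK Kpos by (simp add: divide_right_mono add_divide_distrib[symmetric])
  ultimately show ?thesis by linarith
qed



lemma app_kmul: "app k (kmul k A B) v = app k A (app k B v)"
  unfolding app_def kmul_def
proof (rule ext)
  fix y
  show "(\<Sum>x\<in>words k. (\<Sum>z\<in>words k. A y z * B z x) * v x) = (\<Sum>x\<in>words k. A y x * (\<Sum>xa\<in>words k. B x xa * v xa))"
    by (simp add: sum_distrib_left sum_distrib_right mult.assoc) (rule sum.swap)
qed

lemma app_kadd: "app k (kadd A B) v y = app k A v y + app k B v y"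
  unfolding app_def kadd_def by (simp add: distrib_right sum.distrib)

lemma app_proj: "y \<in> words k \<Longrightarrow> app k (proj w) v y = (if take (length w) y = w then v y else 0)"
proof -
  assume y: "y \<in> words k"
  have "app k (proj w) v y = (\<Sum>x\<in>words k. if y = x then (if take (length w) y = w then v y else 0) else 0)"
    unfolding app_def proj_def by (rule sum.cong) auto
  also have "\<dots> = (if take (length w) y = w then v y else 0)" using y by simp
  finally show ?thesis .
qed

lemma sum_delta_mult:
  assumes "finite A" "z0 \<in> A"
  shows "(\<Sum>z\<in>A. (if z0 = z then a z else 0) * b z) = a z0 * (b z0 :: complex)"
proof -
  have "(\<Sum>z\<in>A. (if z0 = z then a z else 0) * b z) = (\<Sum>z\<in>A. if z0 = z then a z * b z else 0)"
    by (rule sum.cong) auto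
  thus ?thesis using assms by simp
qed

lemma app_Ubar:
  assumes "y \<in> words (Suc k)"
  shows "app (Suc k) (Ubar u) v y = u (last y) False * v (False # butlast y) + u (last y) True * v (True # butlast y)"
proof -
  have bl: "butlast y \<in> words k" using assms by (simp add: words_def)
  show ?thesis unfolding app_def Ubar_def sum_words_Suc
    using bl by (simp add: sum_delta_mult)
qed

lemma app_adjUbar:
  assumes "y \<in> words (Suc k)"
  shows "app (Suc k) (kadj (Ubar u)) v y = cnj (u False (hd y)) * v (tl y @ [False]) + cnj (u True (hd y)) * v (tl y @ [True])"
proof -
  have bl: "tl y \<in> words k" using assms by (simp add: words_def)
  show ?thesis unfolding app_def Ubar_def kadj_def sum_words_snoc
  proof -
    have "(\<Sum>z\<in>words k. cnj (if butlast (z @ [False]) = tl y then u (last (z @ [False])) (hd y) else 0) * v (z @ [False]) +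
        cnj (if butlast (z @ [True]) = tl y then u (last (z @ [True])) (hd y) else 0) * v (z @ [True]))
      = (\<Sum>z\<in>words k. (if tl y = z then cnj (u False (hd y)) else 0) * v (z @ [False])) +
        (\<Sum>z\<in>words k. (if tl y = z then cnj (u True (hd y)) else 0) * v (z @ [True]))"
      by (simp add: sum.distrib[symmetric] eq_commute[of "tl y"]) (rule sum.cong, auto)
    also have "\<dots> = cnj (u False (hd y)) * v (tl y @ [False]) + cnj (u True (hd y)) * v (tl y @ [True])"
      using bl by (simp add: sum_delta_mult)
    finally show "(\<Sum>z\<in>words k. cnj (if butlast (z @ [False]) = tl y then u (last (z @ [False])) (hd y) else 0) * v (z @ [False]) +
        cnj (if butlast (z @ [True]) = tl y then u (last (z @ [True])) (hd y) else 0) * v (z @ [True])) =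
      cnj (u False (hd y)) * v (tl y @ [False]) + cnj (u True (hd y)) * v (tl y @ [True])" .
  qed
qed

lemma swap_snoc2[simp]: "swap_last2 (z @ [a, b]) = z @ [b, a]"
  unfolding swap_last2_def by (simp add: nth_append)

lemma snoc2_eq: "(xs @ [a, b] = ys @ [c, d]) = (xs = ys \<and> a = c \<and> b = d)"
proof -
  have "xs @ [a, b] = (xs @ [a]) @ [b]" "ys @ [c, d] = (ys @ [c]) @ [d]" by simp_all
  thus ?thesis by (simp only: append1_eq_conv) auto
qed

lemma snoc2_ex:
  assumes "length x = Suc (Suc k)"
  obtains x' a b where "x = x' @ [a, b]"
proof -
  obtain x1 b where x1: "x = x1 @ [b]" using assms by (cases x rule: rev_cases) auto
  hence "length x1 = Suc k" using assms by simp
  then obtain x' a where "x1 = x' @ [a]" by (cases x1 rule: rev_cases) auto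
  thus ?thesis using that x1 by simp
qed

lemma app_sigma:
  assumes "z \<in> words k"
  shows "app (Suc (Suc k)) sigma v (z @ [c, d]) = v (z @ [d, c])"
proof -
  have "app (Suc (Suc k)) sigma v (z @ [c, d]) = (\<Sum>x\<in>words (Suc (Suc k)). if z @ [d, c] = x then v x else 0)"
    unfolding app_def sigma_def
  proof (rule sum.cong[OF refl])
    fix x assume "x \<in> words (Suc (Suc k))"
    then obtain x' a b where "x = x' @ [a, b]" using snoc2_ex[of x k] by (auto simp: words_def)
    thus "(if z @ [c, d] = swap_last2 x then 1 else 0) * v x = (if z @ [d, c] = x then v x else 0)"
      by (auto simp add: snoc2_eq)
  qed
  also have "\<dots> = v (z @ [d, c])"
  proof -
    have "z @ [d, c] \<in> words (Suc (Suc k))" using assms by (simp add: words_def)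
    thus ?thesis by simp
  qed
  finally show ?thesis .
qed

lemma unit_facts:
  assumes "unitary2 u"
  shows "cnj (u False False) * u False False + cnj (u True False) * u True False = 1"
    "cnj (u False True) * u False True + cnj (u True True) * u True True = 1"
    "cnj (u False False) * u False True + cnj (u True False) * u True True = 0"
    "cnj (u False True) * u False False + cnj (u True True) * u True False = 0"
  using assms unfolding unitary2_def
  by (auto simp: sum_bool dest: spec[of _ False] spec[of _ True])

lemma nsq_c: "complex_of_real ((cmod z)\<^sup>2) = cnj z * z"
  using complex_norm_square[of z] by (simp add: mult.commute)

lemma unit_norm:
  assumes "unitary2 u"
  shows "(cmod (u False False * a + u False True * b))\<^sup>2 + (cmod (u True False * a + u True True * b))\<^sup>2
       = (cmod a)\<^sup>2 + (cmod b)\<^sup>2"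
proof -
  note e = unit_facts[OF assms]
  let ?L = "cnj (u False False * a + u False True * b) * (u False False * a + u False True * b)
     + cnj (u True False * a + u True True * b) * (u True False * a + u True True * b)"
  have "?L = cnj a * a * (cnj (u False False) * u False False + cnj (u True False) * u True False)
      + cnj b * b * (cnj (u False True) * u False True + cnj (u True True) * u True True)
      + cnj a * b * (cnj (u False False) * u False True + cnj (u True False) * u True True)
      + cnj b * a * (cnj (u False True) * u False False + cnj (u True True) * u True False)"
    by (simp add: algebra_simps)
  also have "\<dots> = cnj a * a + cnj b * b" using e by simp
  finally have "complex_of_real ((cmod (u False False * a + u False True * b))\<^sup>2 + (cmod (u True False * a + u True True * b))\<^sup>2)
       = complex_of_real ((cmod a)\<^sup>2 + (cmod b)\<^sup>2)"
    by (simp only: of_real_add nsq_c)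
  thus ?thesis using of_real_eq_iff by blast
qed

lemma col_norm:
  assumes "unitary2 u"
  shows "(cmod (u False j))\<^sup>2 + (cmod (u True j))\<^sup>2 = 1"
proof -
  have "complex_of_real ((cmod (u False j))\<^sup>2 + (cmod (u True j))\<^sup>2) = 1"
    using unit_facts[OF assms] by (cases j) (simp_all only: of_real_add nsq_c)
  thus ?thesis by (metis of_real_1 of_real_eq_iff)
qed



definition NN :: "nat \<Rightarrow> vec \<Rightarrow> bool list \<Rightarrow> real" where
  "NN k v w = (\<Sum>x\<in>words k. if take (length w) x = w then (cmod (v x))\<^sup>2 else 0)"

lemma NN_nonneg: "NN k v w \<ge> 0"
  unfolding NN_def by (rule sum_nonneg) auto

lemma NN_cons: "NN (Suc k) v (b # w) = (\<Sum>z\<in>words k. if take (length w) z = w then (cmod (v (b # z)))\<^sup>2 else 0)"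
  unfolding NN_def sum_words_Suc by (induct b) simp_all

lemma NN_split:
  assumes "length w < k"
  shows "NN k v w = NN k v (w @ [False]) + NN k v (w @ [True])"
  unfolding NN_def sum.distrib[symmetric]
proof (rule sum.cong[OF refl])
  fix x assume "x \<in> words k"
  hence lx: "length w < length x" using assms by (simp add: words_def)
  hence t: "take (Suc (length w)) x = take (length w) x @ [x ! length w]"
    by (simp add: take_Suc_conv_app_nth)
  show "(if take (length w) x = w then (cmod (v x))\<^sup>2 else 0) =
         (if take (length (w @ [False])) x = w @ [False] then (cmod (v x))\<^sup>2 else 0) +
         (if take (length (w @ [True])) x = w @ [True] then (cmod (v x))\<^sup>2 else 0)"
    using t by (cases "x ! length w") auto
qed

lemma inner_restr:
  "(\<Sum>x\<in>A. cnj (f x) * (if P x then f x else 0)) = complex_of_real (\<Sum>x\<in>A. if P x then (cmod (f x))\<^sup>2 else 0)"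
  unfolding of_real_sum by (rule sum.cong) (auto simp del: of_real_power simp: nsq_c)

lemma sum_words_snoc_in:
  assumes "\<And>z d. z \<in> words k \<Longrightarrow> f (z @ [d]) = h z d"
  shows "(\<Sum>x\<in>words (Suc k). f x) = (\<Sum>z\<in>words k. h z False + h z True)"
  unfolding sum_words_snoc using assms by (intro sum.cong) auto

context
  fixes k1 :: nat and u :: "bool \<Rightarrow> bool \<Rightarrow> complex" and \<psi> :: vec
  assumes U: "unitary2 u"
begin

abbreviation "gr \<equiv> 1 + NN (Suc k1) \<psi> [True]"
abbreviation "c0 \<equiv> complex_of_real (sqrt gr)"

lemma gr_pos: "gr > 0" using NN_nonneg[of "Suc k1" \<psi> "[True]"] by linarith

lemma Gamma_eq: "Gamma (Suc k1) \<psi> = complex_of_real gr"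
proof -
  have "inner_k (Suc k1) \<psi> (app (Suc k1) (proj [True]) \<psi>) =
      (\<Sum>x\<in>words (Suc k1). cnj (\<psi> x) * (if take (length [True]) x = [True] then \<psi> x else 0))"
    unfolding inner_k_def by (rule sum.cong) (auto simp: app_proj)
  also have "\<dots> = complex_of_real (NN (Suc k1) \<psi> [True])"
    unfolding inner_restr NN_def ..
  finally show ?thesis unfolding Gamma_def by simp
qed

lemma csq: "csqrt (Gamma (Suc k1) \<psi>) = c0"
  using gr_pos by (simp add: Gamma_eq)

lemma cmod_c0: "(cmod c0)\<^sup>2 = gr"
  using gr_pos by simp

lemma Psi1_eq: "Psi1 (Suc k1) \<psi> = (\<lambda>x. \<psi> x / c0)"
  unfolding Psi1_def csq ..

lemma Psi2_eq:
  assumes "z \<in> words k1"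
  shows "Psi2 (Suc k1) u \<psi> (z @ [d]) = u d True * \<psi> (True # z) / c0"
proof -
  have m: "z @ [d] \<in> words (Suc k1)" "False # z \<in> words (Suc k1)" "True # z \<in> words (Suc k1)"
    using assms by (auto simp: words_def)
  show ?thesis
    unfolding Psi2_def csq app_kmul app_Ubar[OF m(1)]
    using m by (simp add: app_proj)
qed

lemma part1:
  "inner_k (Suc k1) (Psi1 (Suc k1) \<psi>) (app (Suc k1) (proj w) (Psi1 (Suc k1) \<psi>))
    = complex_of_real (NN (Suc k1) \<psi> w / gr)"
proof -
  have "inner_k (Suc k1) (Psi1 (Suc k1) \<psi>) (app (Suc k1) (proj w) (Psi1 (Suc k1) \<psi>))
     = (\<Sum>x\<in>words (Suc k1). cnj (\<psi> x / c0) * (if take (length w) x = w then \<psi> x / c0 else 0))"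
    unfolding inner_k_def Psi1_eq by (rule sum.cong) (auto simp: app_proj)
  also have "\<dots> = complex_of_real (\<Sum>x\<in>words (Suc k1). if take (length w) x = w then (cmod (\<psi> x / c0))\<^sup>2 else 0)"
    by (rule inner_restr)
  also have "(\<Sum>x\<in>words (Suc k1). if take (length w) x = w then (cmod (\<psi> x / c0))\<^sup>2 else 0)
      = NN (Suc k1) \<psi> w / gr"
    unfolding NN_def sum_divide_distrib
    using gr_pos[unfolded NN_def] by (intro sum.cong) (auto simp: norm_divide power_divide)
  finally show ?thesis .
qed

lemma part2_app:
  assumes "z \<in> words k1" "length w \<le> k1"
  shows "app (Suc k1) (kmul (Suc k1) (Pprime1 (Suc k1) u) (proj w)) (Psi2 (Suc k1) u \<psi>) (z @ [d])
     = (if take (length w) (z @ [d]) = w then Psi2 (Suc k1) u \<psi> (z @ [d]) else 0)"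
proof -
  have m: "z @ [d] \<in> words (Suc k1)" "False # z \<in> words (Suc k1)" "True # z \<in> words (Suc k1)"
    "z @ [False] \<in> words (Suc k1)" "z @ [True] \<in> words (Suc k1)"
    using assms by (auto simp: words_def)
  have tk: "take (length w) (z @ [e]) = take (length w) z" for e using assms by (simp add: words_def)
  have e2: "cnj (u False True) * (u False True * x) + cnj (u True True) * (u True True * x) = x" for x
  proof -
    have "cnj (u False True) * (u False True * x) + cnj (u True True) * (u True True * x)
      = (cnj (u False True) * u False True + cnj (u True True) * u True True) * x" by (simp add: algebra_simps)
    thus ?thesis using unit_facts(2)[OF U] by simp
  qed
  have lz: "length w - length z = 0" using assms by (simp add: words_def)
  show ?thesis
    unfolding Pprime1_def app_kmul app_Ubar[OF m(1)]
    using m assms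
    by (simp add: app_proj app_adjUbar[OF m(3)] Psi2_eq lz add_divide_distrib[symmetric] e2)
qed

lemma part2:
  assumes "length w \<le> k1"
  shows "inner_k (Suc k1) (Psi2 (Suc k1) u \<psi>) (app (Suc k1) (kmul (Suc k1) (Pprime1 (Suc k1) u) (proj w)) (Psi2 (Suc k1) u \<psi>))
    = complex_of_real (NN (Suc k1) \<psi> (True # w) / gr)"
proof -
  have "inner_k (Suc k1) (Psi2 (Suc k1) u \<psi>) (app (Suc k1) (kmul (Suc k1) (Pprime1 (Suc k1) u) (proj w)) (Psi2 (Suc k1) u \<psi>))
     = (\<Sum>z\<in>words k1. complex_of_real (if take (length w) z = w then (cmod (u False True * \<psi> (True # z) / c0))\<^sup>2 else 0) +
          complex_of_real (if take (length w) z = w then (cmod (u True True * \<psi> (True # z) / c0))\<^sup>2 else 0))"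
    unfolding inner_k_def
  proof (rule sum_words_snoc_in[where h="\<lambda>z d. complex_of_real (if take (length w) z = w then (cmod (u d True * \<psi> (True # z) / c0))\<^sup>2 else 0)"])
    fix z d assume z: "z \<in> words k1"
    have lz: "length w - length z = 0" using assms z by (simp add: words_def)
    show "cnj (Psi2 (Suc k1) u \<psi> (z @ [d])) * app (Suc k1) (kmul (Suc k1) (Pprime1 (Suc k1) u) (proj w)) (Psi2 (Suc k1) u \<psi>) (z @ [d])
       = complex_of_real (if take (length w) z = w then (cmod (u d True * \<psi> (True # z) / c0))\<^sup>2 else 0)"
    proof -
      have t: "take (length w) (z @ [d]) = take (length w) z" using lz by simp
      show ?thesis unfolding part2_app[OF z assms] t Psi2_eq[OF z]
        by (cases "take (length w) z = w") (simp_all only: if_True if_False simp_thms nsq_c mult_zero_right of_real_0)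
    qed
  qed
  also have "\<dots> = (\<Sum>z\<in>words k1. complex_of_real (if take (length w) z = w then (cmod (\<psi> (True # z)))\<^sup>2 / gr else 0))"
    proof (rule sum.cong[OF refl])
      fix z
      have "(cmod (u False True * \<psi> (True # z) / c0))\<^sup>2 + (cmod (u True True * \<psi> (True # z) / c0))\<^sup>2
          = ((cmod (u False True))\<^sup>2 + (cmod (u True True))\<^sup>2) * (cmod (\<psi> (True # z)))\<^sup>2 / gr"
        using gr_pos by (simp add: norm_mult norm_divide power_mult_distrib power_divide add_divide_distrib distrib_right)
      also have "\<dots> = (cmod (\<psi> (True # z)))\<^sup>2 / gr" using col_norm[OF U, of True] by simp
      finally show "complex_of_real (if take (length w) z = w then (cmod (u False True * \<psi> (True # z) / c0))\<^sup>2 else 0) +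
          complex_of_real (if take (length w) z = w then (cmod (u True True * \<psi> (True # z) / c0))\<^sup>2 else 0) =
          complex_of_real (if take (length w) z = w then (cmod (\<psi> (True # z)))\<^sup>2 / gr else 0)"
        by (cases "take (length w) z = w") (simp_all only: if_True if_False simp_thms of_real_add[symmetric] add_0)
    qed
  also have "\<dots> = complex_of_real (NN (Suc k1) \<psi> (True # w) / gr)"
    unfolding of_real_sum[symmetric] NN_cons sum_divide_distrib
    by (rule arg_cong[where f=complex_of_real], rule sum.cong) auto
  finally show ?thesis .
qed

lemma mu_formula:
  assumes "length w \<le> k1"
  shows "mu_bar (Suc k1) u \<psi> w = (NN (Suc k1) \<psi> w + NN (Suc k1) \<psi> (True # w)) / gr"
  unfolding mu_bar_def part1 part2[OF assms] by (simp add: add_divide_distrib)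

end

lemma NN_cons2: "NN (Suc (Suc k)) v (a # b # w) = (\<Sum>z\<in>words k. if take (length w) z = w then (cmod (v (a # b # z)))\<^sup>2 else 0)"
  unfolding NN_cons sum_words_Suc by (induct b) simp_all

lemma eigen_coord:
  assumes z: "z \<in> words k2"
    and E: "\<forall>y\<in>words (Suc (Suc k2)). app (Suc (Suc k2)) (Uk (Suc (Suc k2)) u) \<psi> y = lam * \<psi> y"
  shows "lam * \<psi> (z @ [c, d]) = u d False * \<psi> (False # z @ [c])
     + u d True * (u c False * \<psi> (True # False # z) + u c True * \<psi> (True # True # z))"
proof -
  have m: "z @ [c, d] \<in> words (Suc (Suc k2))" "z @ [d, c] \<in> words (Suc (Suc k2))"
    "\<And>b e. b # z @ [e] \<in> words (Suc (Suc k2))" "\<And>a b. a # b # z \<in> words (Suc (Suc k2))"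
    using z by (auto simp: words_def)
  have "lam * \<psi> (z @ [c, d]) = app (Suc (Suc k2)) (Uk (Suc (Suc k2)) u) \<psi> (z @ [c, d])"
    using E m(1) by simp
  also have "\<dots> = u d False * \<psi> (False # z @ [c])
     + u d True * (u c False * \<psi> (True # False # z) + u c True * \<psi> (True # True # z))"
    unfolding Uk_def app_kadd app_kmul app_sigma[OF z] app_Ubar[OF m(1)] app_Ubar[OF m(2)]
    using m by (simp add: app_proj butlast_append algebra_simps app_Ubar[OF m(3)[of False d]] app_Ubar[OF m(3)[of True d]])
  finally show ?thesis .
qed

lemma NN_eigen:
  assumes U: "unitary2 u" and z: "length w \<le> k2" and lam: "cmod lam = 1"
    and E: "\<forall>y\<in>words (Suc (Suc k2)). app (Suc (Suc k2)) (Uk (Suc (Suc k2)) u) \<psi> y = lam * \<psi> y"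
  shows "NN (Suc (Suc k2)) \<psi> w = NN (Suc (Suc k2)) \<psi> (False # w) + NN (Suc (Suc k2)) \<psi> (True # False # w)
     + NN (Suc (Suc k2)) \<psi> (True # True # w)"
proof -
  let ?f = "\<lambda>z. if take (length w) z = w then (cmod (\<psi> (False # z @ [False])))\<^sup>2 + (cmod (\<psi> (False # z @ [True])))\<^sup>2
      + (cmod (\<psi> (True # False # z)))\<^sup>2 + (cmod (\<psi> (True # True # z)))\<^sup>2 else 0"
  have kk: "Suc (Suc k2) = k2 + 2" by simp
  have "NN (Suc (Suc k2)) \<psi> w = (\<Sum>z\<in>words k2. ?f z)"
    unfolding NN_def kk sum_words_app sum_words_2
  proof (rule sum.cong[OF refl])
    fix z assume zz: "z \<in> words k2"
    have lz: "length w - length z = 0" using zz z by (simp add: words_def)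
    have sq: "(cmod (\<psi> (z @ [c, d])))\<^sup>2 = (cmod (u d False * \<psi> (False # z @ [c])
     + u d True * (u c False * \<psi> (True # False # z) + u c True * \<psi> (True # True # z))))\<^sup>2" for c d
    proof -
      have "cmod (\<psi> (z @ [c, d])) = cmod (lam * \<psi> (z @ [c, d]))" using lam by (simp add: norm_mult)
      thus ?thesis unfolding eigen_coord[OF zz E] by simp
    qed
    have s1: "(\<Sum>d\<in>{False}. 0::real) = 0" by simp
    show "(if take (length w) (z @ [False, False]) = w then (cmod (\<psi> (z @ [False, False])))\<^sup>2 else 0) +
          (if take (length w) (z @ [False, True]) = w then (cmod (\<psi> (z @ [False, True])))\<^sup>2 else 0) +
          (if take (length w) (z @ [True, False]) = w then (cmod (\<psi> (z @ [True, False])))\<^sup>2 else 0) +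
          (if take (length w) (z @ [True, True]) = w then (cmod (\<psi> (z @ [True, True])))\<^sup>2 else 0) = ?f z"
    proof (cases "take (length w) z = w")
      case False thus ?thesis using lz by simp
    next
      case True
      have A: "(cmod (\<psi> (z @ [c, False])))\<^sup>2 + (cmod (\<psi> (z @ [c, True])))\<^sup>2
          = (cmod (\<psi> (False # z @ [c])))\<^sup>2 + (cmod (u c False * \<psi> (True # False # z) + u c True * \<psi> (True # True # z)))\<^sup>2" for c
        unfolding sq by (rule unit_norm[OF U])
      have B: "(cmod (u False False * \<psi> (True # False # z) + u False True * \<psi> (True # True # z)))\<^sup>2
           + (cmod (u True False * \<psi> (True # False # z) + u True True * \<psi> (True # True # z)))\<^sup>2
          = (cmod (\<psi> (True # False # z)))\<^sup>2 + (cmod (\<psi> (True # True # z)))\<^sup>2"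
        by (rule unit_norm[OF U])
      show ?thesis using True lz A[of False] A[of True] B by simp
    qed
  qed
  also have "\<dots> = NN (Suc (Suc k2)) \<psi> (False # w) + NN (Suc (Suc k2)) \<psi> (True # False # w)
     + NN (Suc (Suc k2)) \<psi> (True # True # w)"
  proof -
    have n1: "NN (Suc (Suc k2)) \<psi> (False # w) = (\<Sum>z\<in>words k2. if take (length w) z = w then
       (cmod (\<psi> (False # z @ [False])))\<^sup>2 + (cmod (\<psi> (False # z @ [True])))\<^sup>2 else 0)"
      unfolding NN_cons sum_words_snoc
    proof (rule sum.cong[OF refl])
      fix z assume zz: "z \<in> words k2"
      have lz: "length w - length z = 0" using zz z by (simp add: words_def)
      thus "(if take (length w) (z @ [False]) = w then (cmod (\<psi> (False # z @ [False])))\<^sup>2 else 0) +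
         (if take (length w) (z @ [True]) = w then (cmod (\<psi> (False # z @ [True])))\<^sup>2 else 0) =
         (if take (length w) z = w then (cmod (\<psi> (False # z @ [False])))\<^sup>2 + (cmod (\<psi> (False # z @ [True])))\<^sup>2 else 0)"
        by simp
    qed
    have "(\<Sum>z\<in>words k2. ?f z) = (\<Sum>z\<in>words k2. (if take (length w) z = w then
       (cmod (\<psi> (False # z @ [False])))\<^sup>2 + (cmod (\<psi> (False # z @ [True])))\<^sup>2 else 0)
       + (if take (length w) z = w then (cmod (\<psi> (True # False # z)))\<^sup>2 else 0)
       + (if take (length w) z = w then (cmod (\<psi> (True # True # z)))\<^sup>2 else 0))"
      by (rule sum.cong) auto
    thus ?thesis unfolding n1 NN_cons2 by (simp add: sum.distrib)
  qed
  finally show ?thesis .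
qed


theorem proposition9:
  fixes k n :: nat and u :: "bool \<Rightarrow> bool \<Rightarrow> complex" and \<psi> :: vec and \<theta> :: real
  assumes "k \<ge> 3"
    and "unitary2 u"
    and "\<forall>i j. cmod (u i j) = 1 / sqrt 2"
    and "inner_k k \<psi> \<psi> = 1"
    and "\<forall>y\<in>words k. app k (Uk k u) \<psi> y = exp (\<i> * complex_of_real \<theta>) * \<psi> y"
    and "1 \<le> n" and "n < k - 1"
  shows "entr (mu_bar k u \<psi>) n / real n
           \<ge> entr (mu_bar k u \<psi>) (k - 1) / real (k - 1) - real n * ln 2 / real (k - 1)"
proof -
  note U = assms(2)
  define k2 where "k2 = k - 2"
  have kk: "k = Suc (Suc k2)" using assms(1) unfolding k2_def by simp
  define k1 where "k1 = Suc k2"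
  have kk1: "k = Suc k1" "k - 1 = k1" using kk k1_def by simp_all
  define G where "G = 1 + NN (Suc k1) \<psi> [True]"
  have Gp: "G > 0" unfolding G_def using NN_nonneg[of "Suc k1" \<psi> "[True]"] by linarith
  have MU: "mu_bar k u \<psi> w = (NN (Suc k1) \<psi> w + NN (Suc k1) \<psi> (True # w)) / G" if "length w \<le> k1" for w
    unfolding kk1 G_def by (rule mu_formula[OF U that])
  have N0: "NN (Suc k1) \<psi> [] = 1"
  proof -
    have "complex_of_real (NN (Suc k1) \<psi> []) = inner_k (Suc k1) \<psi> \<psi>"
      unfolding NN_def inner_k_def of_real_sum by (rule sum.cong) (auto simp del: of_real_power simp: nsq_c)
    thus ?thesis using assms(4) kk1 by (metis of_real_eq_1_iff)
  qed
  have lam: "cmod (exp (\<i> * complex_of_real \<theta>)) = 1" by simp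
  have E: "\<forall>y\<in>words (Suc (Suc k2)). app (Suc (Suc k2)) (Uk (Suc (Suc k2)) u) \<psi> y = exp (\<i> * complex_of_real \<theta>) * \<psi> y"
    using assms(5) kk by simp
  show ?thesis unfolding kk1(2)
  proof (rule abstract_ineq)
    fix w :: "bool list" assume "length w \<le> k1"
    thus "0 \<le> mu_bar k u \<psi> w" using MU Gp NN_nonneg by simp
  next
    show "mu_bar k u \<psi> [] = 1" using MU[of "[]"] N0 Gp by (simp add: G_def)
  next
    fix w :: "bool list" assume w: "length w < k1"
    have "NN (Suc k1) \<psi> w = NN (Suc k1) \<psi> (w @ [False]) + NN (Suc k1) \<psi> (w @ [True])"
      by (rule NN_split) (use w in simp)
    moreover have "NN (Suc k1) \<psi> (True # w) = NN (Suc k1) \<psi> ((True # w) @ [False]) + NN (Suc k1) \<psi> ((True # w) @ [True])"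
      by (rule NN_split) (use w in simp)
    ultimately show "mu_bar k u \<psi> w = mu_bar k u \<psi> (w @ [False]) + mu_bar k u \<psi> (w @ [True])"
      using w by (simp add: MU add_divide_distrib[symmetric])
  next
    fix w :: "bool list" assume w: "length w < k1"
    have "NN (Suc (Suc k2)) \<psi> w = NN (Suc (Suc k2)) \<psi> (False # w) + NN (Suc (Suc k2)) \<psi> (True # False # w)
     + NN (Suc (Suc k2)) \<psi> (True # True # w)"
      by (rule NN_eigen[OF U _ lam E]) (use w k1_def in simp)
    thus "mu_bar k u \<psi> w = mu_bar k u \<psi> (False # w) + mu_bar k u \<psi> (True # w)"
      using w by (simp add: MU add_divide_distrib[symmetric] k1_def)
  qed (use assms(6,7) kk1 in simp_all)
qed

end
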